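(* Let $G=(V,E)$ be a finite simple graph of order $n$ and let $T=n-1$. If $(x,y,z)$ is an optimal solution of the integer program with the constraints of the Time Step Model $\mathrm{TSM}(G,T)$ and objective "minimize $\sum_{v\in V}x^0_v+\sum_{t\in[T]}z^t$", then $C=\{v\in V\colon x^0_v=1\}$ is a zero forcing set of $G$ with $\mathrm{th}(G)=\mathrm{th}(G,C)=\sum_{v\in V}x^0_v+\sum_{t\in[T]}z^t$.
   Context: Zero forcing: under the standard color change rule a filled vertex $u$ can force a non-filled vertex $v$ if $v$ is the only non-filled neighbor of $u$; $C\subseteq V$ is a zero forcing set if, starting with $C$ filled and repeatedly forcing, all of $V$ becomes filled. The propagation time $\mathrm{pt}(G,C)$ is the smallest $t^*$ such that, starting from $C^{[0]}=C$ and setting $C^{[t]}=C^{[t-1]}\cup\{v\notin C^{[t-1]}\colon$ some $u\in C^{[t-1]}$ has $v$ as its only neighbor outside $C^{[t-1]}\}$, one has $C^{[t^*]}=V$ ($\infty$ if $C$ is not a zero forcing set). $\mathrm{th}(G,C)=|C|+\mathrm{pt}(G,C)$ and $\mathrm{th}(G)=\min_{C\subseteq V}\mathrm{th}(G,C)$. $N(u)$ is the neighborhood of $u$ and $d(u)=|N(u)|$. Time Step Model constraints: $A$ is the set of arcs containing $(u,v)$ and $(v,u)$ for each edge $\{u,v\}$, $[T]=\{1,\dots,T\}$. Binary variables $x^t_v$ ($v\in V$, $t\in\{0,\dots,T\}$), $y^t_a$ ($a\in A$, $t\in[T]$), $z^t$ ($t\in[T]$), with constraints: (1) $x^0_v+\sum_{t\in[T]}\sum_{a=(u,v)\in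 A}y^t_a=1$ for all $v$; (2) $y^t_a\leq x^{t-1}_u$ for all $a=(u,v)\in A$, $t\in[T]$; (3) $y^t_a\leq x^{t-1}_w$ for all $a=(u,v)\in A$, $w\in N(u)\setminus\{v\}$, $t\in[T]$; (4) $x^t_v=x^{t-1}_v+\sum_{a=(u,v)\in A}y^t_a$ for all $v$, $t\in[T]$; (5) $x^{t-1}_u-x^{t-1}_v+\sum_{w\in N(u)\setminus\{v\}}x^{t-1}_w\leq\sum_{a=(w,v)\in A}y^t_a+d(u)-1$ for all $(u,v)\in A$, $t\in[T]$; (6) $\frac1n\sum_{v\in V}(x^t_v-x^{t-1}_v)-z^t\leq0$ for all $t\in[T]$; (7) $z^t-\sum_{v\in V}(x^t_v-x^{t-1}_v)\leq 0$ for all $t\in[T]$. *)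

theory Defs
  imports Main "HOL-Library.Extended_Nat" Complex_Main
begin

definition simple_graph :: "'a set \<Rightarrow> ('a \<Rightarrow> 'a \<Rightarrow> bool) \<Rightarrow> bool" where
  "simple_graph V E \<longleftrightarrow> finite V \<and> (\<forall>u v. E u v \<longrightarrow> u \<in> V \<and> v \<in> V)
     \<and> (\<forall>u v. E u v \<longrightarrow> E v u) \<and> (\<forall>u. \<not> E u u)"

definition nbhd :: "'a set \<Rightarrow> ('a \<Rightarrow> 'a \<Rightarrow> bool) \<Rightarrow> 'a \<Rightarrow> 'a set" where
  "nbhd V E u = {w \<in> V. E u w}"

definition deg :: "'a set \<Rightarrow> ('a \<Rightarrow> 'a \<Rightarrow> bool) \<Rightarrow> 'a \<Rightarrow> nat" where
  "deg V E u = card (nbhd V E u)"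

definition arcs :: "'a set \<Rightarrow> ('a \<Rightarrow> 'a \<Rightarrow> bool) \<Rightarrow> ('a \<times> 'a) set" where
  "arcs V E = {(u, v). u \<in> V \<and> v \<in> V \<and> E u v}"

inductive_set zf_closure :: "'a set \<Rightarrow> ('a \<Rightarrow> 'a \<Rightarrow> bool) \<Rightarrow> 'a set \<Rightarrow> 'a set"
  for V E C where
  init: "v \<in> C \<Longrightarrow> v \<in> zf_closure V E C"
| force: "u \<in> zf_closure V E C \<Longrightarrow> v \<in> nbhd V E u \<Longrightarrow>
          (\<forall>w \<in> nbhd V E u - {v}. w \<in> zf_closure V E C) \<Longrightarrow> v \<in> zf_closure V E C"

definition zero_forcing_set :: "'a set \<Rightarrow> ('a \<Rightarrow> 'a \<Rightarrow> bool) \<Rightarrow> 'a set \<Rightarrow> bool" where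
  "zero_forcing_set V E C \<longleftrightarrow> C \<subseteq> V \<and> V \<subseteq> zf_closure V E C"

definition prop_step :: "'a set \<Rightarrow> ('a \<Rightarrow> 'a \<Rightarrow> bool) \<Rightarrow> 'a set \<Rightarrow> 'a set" where
  "prop_step V E S = S \<union> {v. v \<notin> S \<and> (\<exists>u \<in> S. nbhd V E u - S = {v})}"

definition prop_time :: "'a set \<Rightarrow> ('a \<Rightarrow> 'a \<Rightarrow> bool) \<Rightarrow> 'a set \<Rightarrow> enat" where
  "prop_time V E C = (if \<exists>t. (prop_step V E ^^ t) C = V
      then enat (LEAST t. (prop_step V E ^^ t) C = V) else \<infinity>)"

definition throttle_set :: "'a set \<Rightarrow> ('a \<Rightarrow> 'a \<Rightarrow> bool) \<Rightarrow> 'a set \<Rightarrow> enat" where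
  "throttle_set V E C = enat (card C) + prop_time V E C"

definition throttle :: "'a set \<Rightarrow> ('a \<Rightarrow> 'a \<Rightarrow> bool) \<Rightarrow> enat" where
  "throttle V E = (INF C \<in> Pow V. throttle_set V E C)"

definition in_arcs :: "'a set \<Rightarrow> ('a \<Rightarrow> 'a \<Rightarrow> bool) \<Rightarrow> 'a \<Rightarrow> ('a \<times> 'a) set" where
  "in_arcs V E v = {a \<in> arcs V E. snd a = v}"

definition tsm_feasible :: "'a set \<Rightarrow> ('a \<Rightarrow> 'a \<Rightarrow> bool) \<Rightarrow> nat \<Rightarrow>
    ('a \<Rightarrow> nat \<Rightarrow> real) \<Rightarrow> ('a \<times> 'a \<Rightarrow> nat \<Rightarrow> real) \<Rightarrow> (nat \<Rightarrow> real) \<Rightarrow> bool" where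
  "tsm_feasible V E T x y z \<longleftrightarrow>
     (\<forall>v \<in> V. \<forall>t \<in> {0..T}. x v t \<in> {0, 1}) \<and>
     (\<forall>a \<in> arcs V E. \<forall>t \<in> {1..T}. y a t \<in> {0, 1}) \<and>
     (\<forall>t \<in> {1..T}. z t \<in> {0, 1}) \<and>
     \<comment> \<open>(1)\<close>
     (\<forall>v \<in> V. x v 0 + (\<Sum>t\<in>{1..T}. \<Sum>a\<in>in_arcs V E v. y a t) = 1) \<and>
     \<comment> \<open>(2)\<close>
     (\<forall>(u, v) \<in> arcs V E. \<forall>t \<in> {1..T}. y (u, v) t \<le> x u (t - 1)) \<and>
     \<comment> \<open>(3)\<close>
     (\<forall>(u, v) \<in> arcs V E. \<forall>w \<in> nbhd V E u - {v}. \<forall>t \<in> {1..T}. y (u, v) t \<le> x w (t - 1)) \<and>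
     \<comment> \<open>(4)\<close>
     (\<forall>v \<in> V. \<forall>t \<in> {1..T}. x v t = x v (t - 1) + (\<Sum>a\<in>in_arcs V E v. y a t)) \<and>
     \<comment> \<open>(5)\<close>
     (\<forall>(u, v) \<in> arcs V E. \<forall>t \<in> {1..T}.
        x u (t - 1) - x v (t - 1) + (\<Sum>w\<in>nbhd V E u - {v}. x w (t - 1))
          \<le> (\<Sum>a\<in>in_arcs V E v. y a t) + real (deg V E u) - 1) \<and>
     \<comment> \<open>(6)\<close>
     (\<forall>t \<in> {1..T}. (1 / real (card V)) * (\<Sum>v\<in>V. x v t - x v (t - 1)) - z t \<le> 0) \<and>
     \<comment> \<open>(7)\<close>
     (\<forall>t \<in> {1..T}. z t - (\<Sum>v\<in>V. x v t - x v (t - 1)) \<le> 0)"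

definition tsm_objective :: "'a set \<Rightarrow> nat \<Rightarrow> ('a \<Rightarrow> nat \<Rightarrow> real) \<Rightarrow> (nat \<Rightarrow> real) \<Rightarrow> real" where
  "tsm_objective V T x z = (\<Sum>v\<in>V. x v 0) + (\<Sum>t\<in>{1..T}. z t)"

definition tsm_optimal :: "'a set \<Rightarrow> ('a \<Rightarrow> 'a \<Rightarrow> bool) \<Rightarrow> nat \<Rightarrow>
    ('a \<Rightarrow> nat \<Rightarrow> real) \<Rightarrow> ('a \<times> 'a \<Rightarrow> nat \<Rightarrow> real) \<Rightarrow> (nat \<Rightarrow> real) \<Rightarrow> bool" where
  "tsm_optimal V E T x y z \<longleftrightarrow> tsm_feasible V E T x y z \<and>
     (\<forall>x' y' z'. tsm_feasible V E T x' y' z' \<longrightarrow>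
        tsm_objective V T x z \<le> tsm_objective V T x' z')"

end

theory Submission
  imports Defs
begin


lemma ps_ext: "S \<subseteq> prop_step V E S"
  unfolding prop_step_def by auto

lemma ps_sub: "S \<subseteq> V \<Longrightarrow> prop_step V E S \<subseteq> V"
  unfolding prop_step_def nbhd_def by auto

lemma ps_V: "prop_step V E V = V"
  unfolding prop_step_def nbhd_def by auto

lemma ps_empty: "prop_step V E {} = {}"
  unfolding prop_step_def by auto

lemma X_sub: "C \<subseteq> V \<Longrightarrow> (prop_step V E ^^ t) C \<subseteq> V"
  by (induction t) (auto dest: ps_sub[where E=E])

lemma X_mono: "s \<le> t \<Longrightarrow> (prop_step V E ^^ s) C \<subseteq> (prop_step V E ^^ t) C"
proof (induction t rule: dec_induct)
  case base then show ?case by simp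
next
  case (step n) then show ?case using ps_ext[of "(prop_step V E ^^ n) C" V E] by auto
qed

lemma X_fix: "(prop_step V E ^^ Suc t) C = (prop_step V E ^^ t) C \<Longrightarrow>
   (prop_step V E ^^ (t + j)) C = (prop_step V E ^^ t) C"
  by (induction j) (auto)

lemma X_V: assumes "(prop_step V E ^^ s) C = V" "s \<le> t" shows "(prop_step V E ^^ t) C = V"
  using assms(2)
proof (induction t rule: dec_induct)
  case base then show ?case using assms(1) by simp
next
  case (step n) then show ?case by (simp add: ps_V)
qed

lemma X_strict:
  assumes "(prop_step V E ^^ L) C = V" "L = (LEAST t. (prop_step V E ^^ t) C = V)" "t < L"
  shows "(prop_step V E ^^ Suc t) C \<noteq> (prop_step V E ^^ t) C"
proof
  assume h: "(prop_step V E ^^ Suc t) C = (prop_step V E ^^ t) C"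
  have "(prop_step V E ^^ (t + (L - t))) C = (prop_step V E ^^ t) C" using X_fix[OF h] .
  then have "(prop_step V E ^^ t) C = V" using assms by simp
  then have "L \<le> t" using assms(2) by (simp add: Least_le)
  then show False using assms(3) by simp
qed

lemma X_count:
  assumes "(prop_step V E ^^ T) C = V" "L = (LEAST t. (prop_step V E ^^ t) C = V)"
  shows "{t\<in>{1..T}. (prop_step V E ^^ t) C \<noteq> (prop_step V E ^^ (t - 1)) C} = {1..L}"
proof -
  have LT: "L \<le> T" using assms by (simp add: Least_le)
  have XL: "(prop_step V E ^^ L) C = V" using assms(1) unfolding assms(2) by (rule LeastI)
  show ?thesis
  proof (intro set_eqI iffI)
    fix t assume "t \<in> {t\<in>{1..T}. (prop_step V E ^^ t) C \<noteq> (prop_step V E ^^ (t - 1)) C}"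
    then have t: "1 \<le> t" "t \<le> T" "(prop_step V E ^^ t) C \<noteq> (prop_step V E ^^ (t - 1)) C" by auto
    show "t \<in> {1..L}"
    proof (rule ccontr)
      assume "t \<notin> {1..L}"
      then have "L \<le> t - 1" using t by auto
      then have "(prop_step V E ^^ (t-1)) C = V" "(prop_step V E ^^ t) C = V"
        using X_V[OF XL] by auto
      then show False using t by simp
    qed
  next
    fix t assume "t \<in> {1..L}"
    then have t: "1 \<le> t" "t \<le> L" by auto
    have "(prop_step V E ^^ Suc (t-1)) C \<noteq> (prop_step V E ^^ (t-1)) C"
      by (rule X_strict[OF XL assms(2)]) (use t in auto)
    then show "t \<in> {t\<in>{1..T}. (prop_step V E ^^ t) C \<noteq> (prop_step V E ^^ (t - 1)) C}"
      using t LT by auto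
  qed
qed

lemma X_bound:
  assumes "C \<subseteq> V" "finite V" "\<exists>t. (prop_step V E ^^ t) C = V"
    "L = (LEAST t. (prop_step V E ^^ t) C = V)"
  shows "L \<le> card V - 1"
proof (cases "C = {}")
  case True
  have "(prop_step V E ^^ t) C = {}" for t
    using True by (induction t) (auto simp: ps_empty)
  then have "V = {}" using assms(3) by auto
  then have "L \<le> 0" using assms(4) True by (metis Least_le funpow_0)
  then show ?thesis by simp
next
  case False
  have XL: "(prop_step V E ^^ L) C = V" using assms(3) unfolding assms(4) by (rule LeastI_ex)
  have "t \<le> L \<longrightarrow> card C + t \<le> card ((prop_step V E ^^ t) C)" for t
  proof (induction t)
    case 0 then show ?case by simp
  next
    case (Suc t)
    show ?case
    proof
      assume "Suc t \<le> L"
      then have ne: "(prop_step V E ^^ Suc t) C \<noteq> (prop_step V E ^^ t) C"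
        using X_strict[OF XL assms(4)] by auto
      have sub: "(prop_step V E ^^ t) C \<subseteq> (prop_step V E ^^ Suc t) C"
        using ps_ext[of "(prop_step V E ^^ t) C" V E] by simp
      have fin: "finite ((prop_step V E ^^ Suc t) C)"
        using X_sub[OF assms(1)] assms(2) finite_subset by metis
      have "card ((prop_step V E ^^ t) C) < card ((prop_step V E ^^ Suc t) C)"
        using sub ne fin by (simp add: psubset_card_mono psubset_eq)
      then show "card C + Suc t \<le> card ((prop_step V E ^^ Suc t) C)"
        using Suc \<open>Suc t \<le> L\<close> by simp
    qed
  qed
  then have "card C + L \<le> card V" using XL by (metis order_refl)
  moreover have "card C \<ge> 1" using False assms(1,2) finite_subset
    by (metis One_nat_def Suc_leI card_gt_0_iff)
  ultimately show ?thesis by simp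
qed

lemma X_closure: "(prop_step V E ^^ t) C \<subseteq> zf_closure V E C"
proof (induction t)
  case 0 then show ?case by (auto intro: zf_closure.init)
next
  case (Suc t)
  show ?case
  proof
    fix v assume "v \<in> (prop_step V E ^^ Suc t) C"
    then have "v \<in> prop_step V E ((prop_step V E ^^ t) C)" by simp
    then consider "v \<in> (prop_step V E ^^ t) C"
      | u where "u \<in> (prop_step V E ^^ t) C" "nbhd V E u - (prop_step V E ^^ t) C = {v}"
      unfolding prop_step_def by auto
    then show "v \<in> zf_closure V E C"
    proof cases
      case 1 then show ?thesis using Suc by auto
    next
      case (2 u)
      show ?thesis
      proof (rule zf_closure.force[of u])
        show "u \<in> zf_closure V E C" using 2 Suc by auto
        show "v \<in> nbhd V E u" using 2 by auto
        show "\<forall>w\<in>nbhd V E u - {v}. w \<in> zf_closure V E C" using 2 Suc by auto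
      qed
    qed
  qed
qed



lemma fin_in_arcs: "finite V \<Longrightarrow> finite (in_arcs V E v)"
proof -
  assume "finite V"
  moreover have "in_arcs V E v \<subseteq> V \<times> V" unfolding in_arcs_def arcs_def by auto
  ultimately show ?thesis by (meson finite_SigmaI finite_subset)
qed

lemma fin_nbhd: "finite V \<Longrightarrow> finite (nbhd V E u)"
  unfolding nbhd_def by auto

lemma in_arcs_sub: "in_arcs V E v \<subseteq> arcs V E"
  unfolding in_arcs_def by auto

lemma y_nonneg: "(\<And>a. a \<in> arcs V E \<Longrightarrow> y a t \<in> {0,1}) \<Longrightarrow> (\<Sum>a\<in>in_arcs V E v. y a t) \<ge> (0::real)"
proof (rule sum_nonneg)
  fix a assume h: "\<And>a. a \<in> arcs V E \<Longrightarrow> y a t \<in> {0,1}" and "a \<in> in_arcs V E v"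
  then have "a \<in> arcs V E" using in_arcs_sub[of V E v] by blast
  then have "y a t \<in> {0,1}" using h by blast
  then show "0 \<le> y a t" by auto
qed

lemma ps_intro: "v \<notin> S \<Longrightarrow> u \<in> S \<Longrightarrow> nbhd V E u - S = {v} \<Longrightarrow> v \<in> prop_step V E S"
  unfolding prop_step_def by blast

lemma feasD:
  assumes "tsm_feasible V E T x y z"
  shows "\<forall>v \<in> V. \<forall>t \<in> {0..T}. x v t \<in> {0, 1}"
    "\<forall>a \<in> arcs V E. \<forall>t \<in> {1..T}. y a t \<in> {0, 1}"
    "\<forall>t \<in> {1..T}. z t \<in> {0, 1}"
    "\<forall>v \<in> V. x v 0 + (\<Sum>t\<in>{1..T}. \<Sum>a\<in>in_arcs V E v. y a t) = 1"
    "\<forall>(u, v) \<in> arcs V E. \<forall>t \<in> {1..T}. y (u, v) t \<le> x u (t - 1)"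
    "\<forall>(u, v) \<in> arcs V E. \<forall>w \<in> nbhd V E u - {v}. \<forall>t \<in> {1..T}. y (u, v) t \<le> x w (t - 1)"
    "\<forall>v \<in> V. \<forall>t \<in> {1..T}. x v t = x v (t - 1) + (\<Sum>a\<in>in_arcs V E v. y a t)"
    "\<forall>(u, v) \<in> arcs V E. \<forall>t \<in> {1..T}.
        x u (t - 1) - x v (t - 1) + (\<Sum>w\<in>nbhd V E u - {v}. x w (t - 1))
          \<le> (\<Sum>a\<in>in_arcs V E v. y a t) + real (deg V E u) - 1"
    "\<forall>t \<in> {1..T}. (1 / real (card V)) * (\<Sum>v\<in>V. x v t - x v (t - 1)) - z t \<le> 0"
    "\<forall>t \<in> {1..T}. z t - (\<Sum>v\<in>V. x v t - x v (t - 1)) \<le> 0"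
  using assms unfolding tsm_feasible_def
  apply -
  apply (elim conjE, assumption)+
  done

lemma feas_step:
  assumes G: "simple_graph V E" and F: "tsm_feasible V E T x y z" and t: "t \<in> {1..T}"
  shows "{v\<in>V. x v t = 1} = prop_step V E {v\<in>V. x v (t - 1) = 1}"
proof -
  have finV: "finite V" using G unfolding simple_graph_def by auto
  define S where "S = {v\<in>V. x v (t - 1) = 1}"
  define s where "s v = (\<Sum>a\<in>in_arcs V E v. y a t)" for v
  have xb: "\<And>v t'. v \<in> V \<Longrightarrow> t' \<in> {0..T} \<Longrightarrow> x v t' \<in> {0,1}"
    using feasD(1)[OF F] by blast
  have yb: "\<And>a. a \<in> arcs V E \<Longrightarrow> y a t \<in> {0,1}"
    using feasD(2)[OF F] t by blast
  have c2: "y (u, v) t \<le> x u (t - 1)" if "(u,v) \<in> arcs V E" for u v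
    using bspec[OF feasD(5)[OF F] that] t by simp
  have c3: "y (u, v) t \<le> x w (t - 1)" if "(u,v) \<in> arcs V E" "w \<in> nbhd V E u - {v}" for u v w
    using bspec[OF feasD(6)[OF F] that(1)] that(2) t by simp
  have c4: "\<And>v. v \<in> V \<Longrightarrow> x v t = x v (t - 1) + s v"
    using feasD(7)[OF F] t unfolding s_def by blast
  have c5: "x u (t - 1) - x v (t - 1) + (\<Sum>w\<in>nbhd V E u - {v}. x w (t - 1))
          \<le> s v + real (deg V E u) - 1" if "(u,v) \<in> arcs V E" for u v
    using bspec[OF feasD(8)[OF F] that] t unfolding s_def by simp
  have t1: "t \<in> {0..T}" "t - 1 \<in> {0..T}" using t by auto
  have s_nonneg: "s v \<ge> 0" for v
    unfolding s_def using y_nonneg[of V E y t v] yb by blast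
  show ?thesis
  proof (intro set_eqI iffI)
    fix v assume "v \<in> {v\<in>V. x v t = 1}"
    then have v: "v \<in> V" "x v t = 1" by auto
    show "v \<in> prop_step V E {v\<in>V. x v (t - 1) = 1}"
    proof (cases "x v (t - 1) = 1")
      case True
      then have "v \<in> {v\<in>V. x v (t - 1) = 1}" using v by simp
      then show ?thesis using ps_ext[of "{v\<in>V. x v (t - 1) = 1}" V E] by (rule subsetD[rotated])
    next
      case False
      then have x0: "x v (t - 1) = 0" using xb[OF v(1) t1(2)] by auto
      then have s1: "s v = 1" using c4[OF v(1)] v by simp
      have "\<exists>a\<in>in_arcs V E v. y a t \<noteq> 0"
      proof (rule ccontr)
        assume "\<not> (\<exists>a\<in>in_arcs V E v. y a t \<noteq> 0)"
        then have "\<forall>a\<in>in_arcs V E v. y a t = 0" by blast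
        then have "s v = 0" unfolding s_def by simp
        then show False using s1 by simp
      qed
      then obtain a where a: "a \<in> in_arcs V E v" "y a t \<noteq> 0" by blast
      then have "a \<in> arcs V E" "snd a = v" unfolding in_arcs_def by auto
      then obtain u where u: "a = (u, v)" "(u, v) \<in> arcs V E" by (metis prod.collapse)
      have ya: "y (u, v) t = 1" using yb[OF u(2)] a u by auto
      have uV: "u \<in> V" and Euv: "E u v" using u(2) unfolding arcs_def by auto
      have "x u (t - 1) = 1" using c2[OF u(2)] ya xb[OF uV t1(2)] by auto
      then have uS: "u \<in> S" using uV S_def by auto
      have "w \<in> S" if "w \<in> nbhd V E u - {v}" for w
      proof -
        have wV: "w \<in> V" using that unfolding nbhd_def by auto
        have "x w (t - 1) = 1" using c3[OF u(2) that] ya xb[OF wV t1(2)] by auto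
        then show ?thesis using wV S_def by auto
      qed
      moreover have "v \<in> nbhd V E u" using v Euv unfolding nbhd_def by auto
      moreover have "v \<notin> S" using x0 S_def by auto
      ultimately have "nbhd V E u - S = {v}" by blast
      then have "v \<in> prop_step V E S" by (rule ps_intro[OF \<open>v \<notin> S\<close> uS])
      then show ?thesis unfolding S_def .
    qed
  next
    fix v assume "v \<in> prop_step V E {v\<in>V. x v (t - 1) = 1}"
    then have "v \<in> prop_step V E S" using S_def by simp
    then consider "v \<in> S" | u where "v \<notin> S" "u \<in> S" "nbhd V E u - S = {v}"
      unfolding prop_step_def by auto
    then show "v \<in> {v\<in>V. x v t = 1}"
    proof cases
      case 1
      then have v: "v \<in> V" "x v (t - 1) = 1" using S_def by auto
      then have "x v t \<ge> 1" using c4[OF v(1)] s_nonneg[of v] by simp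
      then show ?thesis using xb[OF v(1) t1(1)] v by auto
    next
      case (2 u)
      have vN: "v \<in> nbhd V E u" using 2 by auto
      then have vV: "v \<in> V" and Euv: "E u v" unfolding nbhd_def by auto
      have uV: "u \<in> V" using 2 S_def by auto
      have arc: "(u, v) \<in> arcs V E" using uV vV Euv unfolding arcs_def by auto
      have xu: "x u (t - 1) = 1" using 2 S_def by auto
      have xv: "x v (t - 1) = 0" using 2 S_def xb[OF vV t1(2)] vV by auto
      have "\<And>w. w \<in> nbhd V E u - {v} \<Longrightarrow> x w (t - 1) = 1"
        using 2 S_def by blast
      then have "(\<Sum>w\<in>nbhd V E u - {v}. x w (t - 1)) = real (card (nbhd V E u - {v}))"
        by simp
      also have "card (nbhd V E u - {v}) = deg V E u - 1"
        unfolding deg_def using vN fin_nbhd[OF finV] by (simp add: card_Diff_singleton)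
      finally have sumw: "(\<Sum>w\<in>nbhd V E u - {v}. x w (t - 1)) = real (deg V E u - 1)" .
      have dpos: "deg V E u \<ge> 1" unfolding deg_def using vN fin_nbhd[OF finV]
        by (metis One_nat_def Suc_leI card_gt_0_iff empty_iff)
      have "1 + real (deg V E u - 1) \<le> s v + real (deg V E u) - 1"
        using c5[OF arc] xu xv sumw by simp
      then have "s v \<ge> 1" using dpos by (simp add: of_nat_diff)
      then have "x v t \<ge> 1" using c4[OF vV] xv by simp
      then show ?thesis using xb[OF vV t1(1)] vV by auto
    qed
  qed
qed

lemma feas_X:
  assumes G: "simple_graph V E" and F: "tsm_feasible V E T x y z" and t: "t \<le> T"
  shows "{v\<in>V. x v t = 1} = (prop_step V E ^^ t) {v\<in>V. x v 0 = 1}"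
  using t
proof (induction t)
  case 0 then show ?case by simp
next
  case (Suc t)
  have "{v\<in>V. x v (Suc t) = 1} = prop_step V E {v\<in>V. x v (Suc t - 1) = 1}"
    by (rule feas_step[OF G F]) (use Suc in auto)
  then show ?case using Suc by simp
qed

lemma feas_z:
  assumes G: "simple_graph V E" and F: "tsm_feasible V E T x y z" and t: "t \<in> {1..T}"
  shows "z t = (if {v\<in>V. x v t = 1} \<noteq> {v\<in>V. x v (t - 1) = 1} then 1 else 0)"
proof -
  have finV: "finite V" using G unfolding simple_graph_def by auto
  have xb: "\<And>v t'. v \<in> V \<Longrightarrow> t' \<in> {0..T} \<Longrightarrow> x v t' \<in> {0,1}"
    using feasD(1)[OF F] by blast
  have yb: "\<And>a. a \<in> arcs V E \<Longrightarrow> y a t \<in> {0,1}"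
    using feasD(2)[OF F] t by blast
  have zb: "z t \<in> {0,1}" using feasD(3)[OF F] t by blast
  have c4: "\<And>v. v \<in> V \<Longrightarrow> x v t = x v (t - 1) + (\<Sum>a\<in>in_arcs V E v. y a t)"
    using feasD(7)[OF F] t by blast
  have c6: "(1 / real (card V)) * (\<Sum>v\<in>V. x v t - x v (t - 1)) - z t \<le> 0"
    using feasD(9)[OF F] t by blast
  have c7: "z t - (\<Sum>v\<in>V. x v t - x v (t - 1)) \<le> 0"
    using feasD(10)[OF F] t by blast
  have t1: "t \<in> {0..T}" "t - 1 \<in> {0..T}" using t by auto
  have nn: "x v t - x v (t - 1) \<ge> 0" if "v \<in> V" for v
  proof -
    have "(\<Sum>a\<in>in_arcs V E v. y a t) \<ge> 0"
      using y_nonneg[of V E y t v] yb by blast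
    then show ?thesis using c4[OF that] by simp
  qed
  show ?thesis
  proof (cases "{v\<in>V. x v t = 1} \<noteq> {v\<in>V. x v (t - 1) = 1}")
    case True
    then obtain v where v0: "v \<in> V" "(x v t = 1) \<noteq> (x v (t - 1) = 1)" by blast
    then have v: "v \<in> V" "x v t \<noteq> x v (t - 1)" by auto
    then have "x v t - x v (t - 1) = 1"
      using nn[OF v(1)] xb[OF v(1) t1(1)] xb[OF v(1) t1(2)] by auto
    then have "1 \<le> (\<Sum>v\<in>V. x v t - x v (t - 1))"
      using member_le_sum[of v V "\<lambda>v. x v t - x v (t - 1)"] v nn finV by auto
    moreover have "card V > 0" using v finV card_gt_0_iff by blast
    ultimately have "(1 / real (card V)) * (\<Sum>v\<in>V. x v t - x v (t - 1)) > 0" by simp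
    then have "z t > 0" using c6 by simp
    then show ?thesis using zb True by auto
  next
    case False
    have "x v t - x v (t - 1) = 0" if "v \<in> V" for v
    proof -
      have "(x v t = 1) = (x v (t - 1) = 1)" using False that by blast
      then show ?thesis using xb[OF that t1(1)] xb[OF that t1(2)] by auto
    qed
    then have "(\<Sum>v\<in>V. x v t - x v (t - 1)) = 0" by simp
    then have "z t \<le> 0" using c7 by simp
    then show ?thesis using zb False by auto
  qed
qed



lemma sum_ind: "finite A \<Longrightarrow> (\<Sum>v\<in>A. if P v then (1::real) else 0) = real (card {v\<in>A. P v})"
  by (simp add: sum.inter_filter[symmetric])

lemma obj_eq:
  assumes "finite V" "C \<subseteq> V" "(prop_step V E ^^ T) C = V"
    "\<forall>v\<in>V. x v 0 = (if v \<in> C then 1 else 0)"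
    "\<forall>t\<in>{1..T}. z t = (if (prop_step V E ^^ t) C \<noteq> (prop_step V E ^^ (t - 1)) C then 1 else 0)"
  shows "tsm_objective V T x z = real (card C + (LEAST t. (prop_step V E ^^ t) C = V))"
proof -
  have "(\<Sum>v\<in>V. x v 0) = (\<Sum>v\<in>V. if v \<in> C then 1 else 0)" using assms(4) by simp
  also have "\<dots> = real (card {v\<in>V. v \<in> C})" using assms(1) by (rule sum_ind)
  also have "{v\<in>V. v \<in> C} = C" using assms(2) by auto
  finally have 1: "(\<Sum>v\<in>V. x v 0) = real (card C)" .
  have "(\<Sum>t\<in>{1..T}. z t) = (\<Sum>t\<in>{1..T}. if (prop_step V E ^^ t) C \<noteq> (prop_step V E ^^ (t - 1)) C then 1 else 0)"
    using assms(5) by simp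
  also have "\<dots> = real (card {t\<in>{1..T}. (prop_step V E ^^ t) C \<noteq> (prop_step V E ^^ (t - 1)) C})"
    by (rule sum_ind) simp
  also have "{t\<in>{1..T}. (prop_step V E ^^ t) C \<noteq> (prop_step V E ^^ (t - 1)) C}
      = {1..(LEAST t. (prop_step V E ^^ t) C = V)}"
    by (rule X_count[OF assms(3)]) simp
  finally have 2: "(\<Sum>t\<in>{1..T}. z t) = real (LEAST t. (prop_step V E ^^ t) C = V)" by simp
  show ?thesis unfolding tsm_objective_def 1 2 by simp
qed

lemma telescope: fixes T :: nat shows "(\<Sum>t\<in>{1..T}. f t - f (t - 1)) = f T - (f 0 :: real)"
proof (induction T)
  case 0 then show ?case by simp
next
  case (Suc T)
  have "{1..Suc T} = insert (Suc T) {1..T}" by auto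
  then show ?case using Suc by simp
qed

lemma construct:
  assumes G: "simple_graph V E" and CV: "C \<subseteq> V" and XT: "(prop_step V E ^^ T) C = V"
  shows "\<exists>x y z. tsm_feasible V E T x y z \<and>
     tsm_objective V T x z = real (card C + (LEAST t. (prop_step V E ^^ t) C = V))"
proof -
  have finV: "finite V" using G unfolding simple_graph_def by auto
  define X where "X t = (prop_step V E ^^ t) C" for t
  define F where "F t v = (SOME u. u \<in> X (t - 1) \<and> nbhd V E u - X (t - 1) = {v})" for t v
  define xx :: "'a \<Rightarrow> nat \<Rightarrow> real" where "xx v t = (if v \<in> X t then 1 else 0)" for v t
  define yy :: "'a \<times> 'a \<Rightarrow> nat \<Rightarrow> real" where
    "yy a t = (if snd a \<in> X t \<and> snd a \<notin> X (t - 1) \<and> fst a = F t (snd a) then 1 else 0)" for a t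
  define zz :: "nat \<Rightarrow> real" where "zz t = (if X t \<noteq> X (t - 1) then 1 else 0)" for t
  have Xsuc: "X t = prop_step V E (X (t - 1))" if "t \<ge> 1" for t
  proof -
    have "t = Suc (t - 1)" using that by simp
    then have "X t = X (Suc (t - 1))" by simp
    then show ?thesis unfolding X_def by simp
  qed
  have Xsub: "X t \<subseteq> V" for t unfolding X_def using X_sub[OF CV] .
  have Xmono: "X s \<subseteq> X t" if "s \<le> t" for s t unfolding X_def using X_mono[OF that] .
  have Xm1: "X (t - 1) \<subseteq> X t" for t using Xmono[of "t - 1" t] by simp
  have XTV: "X T = V" using XT X_def by simp
  have Fprop: "F t v \<in> X (t - 1) \<and> nbhd V E (F t v) - X (t - 1) = {v}"
    if "t \<ge> 1" "v \<in> X t" "v \<notin> X (t - 1)" for t v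
  proof -
    have "v \<in> prop_step V E (X (t - 1))" using Xsuc[OF that(1)] that(2) by simp
    then have "\<exists>u. u \<in> X (t - 1) \<and> nbhd V E u - X (t - 1) = {v}"
      using that(3) unfolding prop_step_def by blast
    then show ?thesis unfolding F_def by (rule someI_ex)
  qed
  have key: "(\<Sum>a\<in>in_arcs V E v. yy a t) = (if v \<in> X t \<and> v \<notin> X (t - 1) then 1 else 0)"
    if "t \<ge> 1" for t v
  proof (cases "v \<in> X t \<and> v \<notin> X (t - 1)")
    case True
    define u where "u = F t v"
    have u: "u \<in> X (t - 1)" "nbhd V E u - X (t - 1) = {v}" using Fprop[OF that] True u_def by auto
    have vN: "v \<in> nbhd V E u" using u(2) by blast
    have uV: "u \<in> V" using u(1) Xsub by blast
    have arc: "(u, v) \<in> in_arcs V E v" using vN uV unfolding in_arcs_def arcs_def nbhd_def by auto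
    have "(\<Sum>a\<in>in_arcs V E v. yy a t) = (\<Sum>a\<in>in_arcs V E v. if a = (u, v) then 1 else 0)"
    proof (rule sum.cong)
      fix a assume "a \<in> in_arcs V E v"
      then have "snd a = v" unfolding in_arcs_def by auto
      then show "yy a t = (if a = (u, v) then 1 else 0)"
        unfolding yy_def u_def using True by (cases a) auto
    qed simp
    also have "\<dots> = 1" using arc fin_in_arcs[OF finV] by simp
    finally show ?thesis using True by simp
  next
    case False
    have "(\<Sum>a\<in>in_arcs V E v. yy a t) = (\<Sum>a\<in>in_arcs V E v. 0)"
    proof (rule sum.cong)
      fix a assume "a \<in> in_arcs V E v"
      then have "snd a = v" unfolding in_arcs_def by auto
      then show "yy a t = 0" unfolding yy_def using False by auto
    qed simp
    then show ?thesis using False by simp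
  qed
  have ind: "(if v \<in> X t \<and> v \<notin> X (t - 1) then 1 else 0) = xx v t - xx v (t - 1)" for v t
    using Xm1[of t] unfolding xx_def by auto
  have f1: "\<forall>v \<in> V. \<forall>t \<in> {0..T}. xx v t \<in> {0, 1}" unfolding xx_def by auto
  have f2: "\<forall>a \<in> arcs V E. \<forall>t \<in> {1..T}. yy a t \<in> {0, 1}" unfolding yy_def by auto
  have f3: "\<forall>t \<in> {1..T}. zz t \<in> {0, 1}" unfolding zz_def by auto
  have f4: "\<forall>v \<in> V. xx v 0 + (\<Sum>t\<in>{1..T}. \<Sum>a\<in>in_arcs V E v. yy a t) = 1"
  proof
    fix v assume vV: "v \<in> V"
    have "(\<Sum>t\<in>{1..T}. \<Sum>a\<in>in_arcs V E v. yy a t) = (\<Sum>t\<in>{1..T}. xx v t - xx v (t - 1))"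
      using key ind by (intro sum.cong) auto
    also have "\<dots> = xx v T - xx v 0" by (rule telescope)
    also have "xx v T = 1" using vV XTV unfolding xx_def by simp
    finally show "xx v 0 + (\<Sum>t\<in>{1..T}. \<Sum>a\<in>in_arcs V E v. yy a t) = 1" by simp
  qed
  have f5: "\<forall>(u, v) \<in> arcs V E. \<forall>t \<in> {1..T}. yy (u, v) t \<le> xx u (t - 1)"
  proof (intro ballI, clarify)
    fix u v t assume t: "t \<in> {1..T}"
    show "yy (u, v) t \<le> xx u (t - 1)"
    proof (cases "v \<in> X t \<and> v \<notin> X (t - 1) \<and> u = F t v")
      case True
      then have "u \<in> X (t - 1)" using Fprop[of t v] t by auto
      then show ?thesis unfolding xx_def yy_def by simp
    next
      case False
      then show ?thesis unfolding xx_def yy_def by auto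
    qed
  qed
  have f6: "\<forall>(u, v) \<in> arcs V E. \<forall>w \<in> nbhd V E u - {v}. \<forall>t \<in> {1..T}. yy (u, v) t \<le> xx w (t - 1)"
  proof (intro ballI, clarify)
    fix u v w t assume t: "t \<in> {1..T}" and w: "w \<in> nbhd V E u" "w \<noteq> v"
    show "yy (u, v) t \<le> xx w (t - 1)"
    proof (cases "v \<in> X t \<and> v \<notin> X (t - 1) \<and> u = F t v")
      case True
      then have "nbhd V E u - X (t - 1) = {v}" using Fprop[of t v] t by auto
      then have "w \<in> X (t - 1)" using w by blast
      then show ?thesis unfolding xx_def yy_def by simp
    next
      case False
      then show ?thesis unfolding xx_def yy_def by auto
    qed
  qed
  have f7: "\<forall>v \<in> V. \<forall>t \<in> {1..T}. xx v t = xx v (t - 1) + (\<Sum>a\<in>in_arcs V E v. yy a t)"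
  proof (intro ballI)
    fix v t assume "v \<in> V" "t \<in> {1..T}"
    then show "xx v t = xx v (t - 1) + (\<Sum>a\<in>in_arcs V E v. yy a t)"
      using key[of t v] ind[of v t] by simp
  qed
  have f8: "\<forall>(u, v) \<in> arcs V E. \<forall>t \<in> {1..T}.
        xx u (t - 1) - xx v (t - 1) + (\<Sum>w\<in>nbhd V E u - {v}. xx w (t - 1))
          \<le> (\<Sum>a\<in>in_arcs V E v. yy a t) + real (deg V E u) - 1"
  proof (intro ballI, clarify)
    fix u v t assume arc: "(u, v) \<in> arcs V E" and t: "t \<in> {1..T}"
    have vN: "v \<in> nbhd V E u" using arc unfolding arcs_def nbhd_def by auto
    have finN: "finite (nbhd V E u - {v})" using fin_nbhd[OF finV] by simp
    have cN: "card (nbhd V E u - {v}) = deg V E u - 1"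
      unfolding deg_def using vN fin_nbhd[OF finV] by (simp add: card_Diff_singleton)
    have dpos: "deg V E u \<ge> 1" unfolding deg_def using vN fin_nbhd[OF finV]
      by (metis One_nat_def Suc_leI card_gt_0_iff empty_iff)
    define S where "S = X (t - 1)"
    have sw: "(\<Sum>w\<in>nbhd V E u - {v}. xx w (t - 1)) = real (card {w\<in>nbhd V E u - {v}. w \<in> S})"
      unfolding xx_def S_def by (rule sum_ind[OF finN])
    have sub: "{w\<in>nbhd V E u - {v}. w \<in> S} \<subseteq> nbhd V E u - {v}" by auto
    have cle: "card {w\<in>nbhd V E u - {v}. w \<in> S} \<le> deg V E u - 1"
      using card_mono[OF finN sub] cN by simp
    have sy: "(\<Sum>a\<in>in_arcs V E v. yy a t) = (if v \<in> X t \<and> v \<notin> S then 1 else 0)"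
      using key[of t v] t S_def by simp
    have xu: "xx u (t - 1) \<le> 1" "xx u (t - 1) \<ge> 0" "xx v (t - 1) \<ge> 0" "xx v (t - 1) \<le> 1"
      unfolding xx_def by auto
    show "xx u (t - 1) - xx v (t - 1) + (\<Sum>w\<in>nbhd V E u - {v}. xx w (t - 1))
          \<le> (\<Sum>a\<in>in_arcs V E v. yy a t) + real (deg V E u) - 1"
    proof (cases "u \<in> S \<and> v \<notin> S \<and> nbhd V E u - {v} \<subseteq> S")
      case True
      then have "nbhd V E u - S = {v}" using vN by blast
      then have "v \<in> prop_step V E S" using ps_intro[of v S u V E] True by blast
      then have "v \<in> X t" using Xsuc[of t] t S_def by simp
      then have "(\<Sum>a\<in>in_arcs V E v. yy a t) = 1" using sy True by simp
      then show ?thesis using sw cle xu dpos by (simp add: of_nat_diff)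
    next
      case False
      then consider "u \<notin> S" | "v \<in> S" | "\<not> (nbhd V E u - {v} \<subseteq> S)" by blast
      then have lhs: "xx u (t - 1) - xx v (t - 1) + real (card {w\<in>nbhd V E u - {v}. w \<in> S}) \<le> real (deg V E u) - 1"
      proof cases
        case 1
        then have "xx u (t - 1) = 0" unfolding xx_def S_def by simp
        then show ?thesis using cle xu dpos by (simp add: of_nat_diff)
      next
        case 2
        then have "xx v (t - 1) = 1" unfolding xx_def S_def by simp
        then show ?thesis using cle xu dpos by (simp add: of_nat_diff)
      next
        case 3
        then have "{w\<in>nbhd V E u - {v}. w \<in> S} \<noteq> nbhd V E u - {v}" by blast
        then have "card {w\<in>nbhd V E u - {v}. w \<in> S} < card (nbhd V E u - {v})"
          using sub finN by (meson psubsetI psubset_card_mono)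
        then have "card {w\<in>nbhd V E u - {v}. w \<in> S} + 1 \<le> deg V E u - 1" using cN by simp
        then have "real (card {w\<in>nbhd V E u - {v}. w \<in> S}) + 1 \<le> real (deg V E u) - 1"
          using dpos by (simp add: of_nat_diff)
        then show ?thesis using xu by simp
      qed
      have "(\<Sum>a\<in>in_arcs V E v. yy a t) \<ge> 0" using sy by simp
      then show ?thesis using lhs sw by simp
    qed
  qed
  have D: "(\<Sum>v\<in>V. xx v t - xx v (t - 1)) = real (card {v\<in>V. v \<in> X t \<and> v \<notin> X (t - 1)})" for t
  proof -
    have "(\<Sum>v\<in>V. xx v t - xx v (t - 1)) = (\<Sum>v\<in>V. if v \<in> X t \<and> v \<notin> X (t - 1) then 1 else 0)"
      using ind by simp
    also have "\<dots> = real (card {v\<in>V. v \<in> X t \<and> v \<notin> X (t - 1)})" by (rule sum_ind[OF finV])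
    finally show ?thesis .
  qed
  have Dne: "{v\<in>V. v \<in> X t \<and> v \<notin> X (t - 1)} \<noteq> {} \<longleftrightarrow> X t \<noteq> X (t - 1)" for t
    using Xm1[of t] Xsub[of t] by blast
  have f9: "\<forall>t \<in> {1..T}. (1 / real (card V)) * (\<Sum>v\<in>V. xx v t - xx v (t - 1)) - zz t \<le> 0"
  proof
    fix t assume "t \<in> {1..T}"
    have cle: "card {v\<in>V. v \<in> X t \<and> v \<notin> X (t - 1)} \<le> card V"
      by (rule card_mono[OF finV]) auto
    show "(1 / real (card V)) * (\<Sum>v\<in>V. xx v t - xx v (t - 1)) - zz t \<le> 0"
    proof (cases "X t \<noteq> X (t - 1)")
      case True
      then have "card V > 0" using Dne[of t] finV card_gt_0_iff by blast
      then have "(1 / real (card V)) * real (card {v\<in>V. v \<in> X t \<and> v \<notin> X (t - 1)}) \<le> 1"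
        using cle by (simp add: divide_le_eq_1)
      then show ?thesis unfolding D zz_def using True by simp
    next
      case False
      then have "{v\<in>V. v \<in> X t \<and> v \<notin> X (t - 1)} = {}" using Dne[of t] by blast
      then show ?thesis unfolding D zz_def using False by simp
    qed
  qed
  have f10: "\<forall>t \<in> {1..T}. zz t - (\<Sum>v\<in>V. xx v t - xx v (t - 1)) \<le> 0"
  proof
    fix t assume "t \<in> {1..T}"
    show "zz t - (\<Sum>v\<in>V. xx v t - xx v (t - 1)) \<le> 0"
    proof (cases "X t \<noteq> X (t - 1)")
      case True
      then have "card {v\<in>V. v \<in> X t \<and> v \<notin> X (t - 1)} > 0"
        using Dne[of t] finV card_gt_0_iff by fastforce
      then show ?thesis unfolding D zz_def using True by simp
    next
      case False
      then show ?thesis unfolding D zz_def by simp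
    qed
  qed
  have feas: "tsm_feasible V E T xx yy zz"
    unfolding tsm_feasible_def using f1 f2 f3 f4 f5 f6 f7 f8 f9 f10 by (intro conjI)
  have obj: "tsm_objective V T xx zz = real (card C + (LEAST t. (prop_step V E ^^ t) C = V))"
  proof (rule obj_eq[OF finV CV XT])
    show "\<forall>v\<in>V. xx v 0 = (if v \<in> C then 1 else 0)" unfolding xx_def X_def by simp
    show "\<forall>t\<in>{1..T}. zz t = (if (prop_step V E ^^ t) C \<noteq> (prop_step V E ^^ (t - 1)) C then 1 else 0)"
      unfolding zz_def X_def by simp
  qed
  show ?thesis using feas obj by blast
qed



lemma feas_all:
  assumes G: "simple_graph V E" and F: "tsm_feasible V E T x y z" and vV: "v \<in> V"
  shows "x v T = 1"
proof -
  have xb: "\<And>v t'. v \<in> V \<Longrightarrow> t' \<in> {0..T} \<Longrightarrow> x v t' \<in> {0,1}"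
    using feasD(1)[OF F] by blast
  have yb: "\<And>a t. t \<in> {1..T} \<Longrightarrow> a \<in> arcs V E \<Longrightarrow> y a t \<in> {0,1}"
    using feasD(2)[OF F] by blast
  have c1: "x v 0 + (\<Sum>t\<in>{1..T}. \<Sum>a\<in>in_arcs V E v. y a t) = 1"
    using feasD(4)[OF F] vV by blast
  have c4: "\<And>t. t \<in> {1..T} \<Longrightarrow> x v t = x v (t - 1) + (\<Sum>a\<in>in_arcs V E v. y a t)"
    using feasD(7)[OF F] vV by blast
  have Xeq: "\<And>t. t \<le> T \<Longrightarrow> {v\<in>V. x v t = 1} = (prop_step V E ^^ t) {v\<in>V. x v 0 = 1}"
    using feas_X[OF G F] by blast
  obtain t where t: "t \<le> T" "x v t = 1"
  proof (cases "x v 0 = 1")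
    case True then show ?thesis using that[of 0] by simp
  next
    case False
    then have "x v 0 = 0" using xb[OF vV, of 0] by auto
    then have s1: "(\<Sum>t\<in>{1..T}. \<Sum>a\<in>in_arcs V E v. y a t) = 1" using c1 by simp
    have "\<exists>t\<in>{1..T}. (\<Sum>a\<in>in_arcs V E v. y a t) \<noteq> 0"
    proof (rule ccontr)
      assume "\<not> (\<exists>t\<in>{1..T}. (\<Sum>a\<in>in_arcs V E v. y a t) \<noteq> 0)"
      then have "\<forall>t\<in>{1..T}. (\<Sum>a\<in>in_arcs V E v. y a t) = 0" by blast
      then have "(\<Sum>t\<in>{1..T}. \<Sum>a\<in>in_arcs V E v. y a t) = 0" by simp
      then show False using s1 by simp
    qed
    then obtain t where t: "t \<in> {1..T}" "(\<Sum>a\<in>in_arcs V E v. y a t) \<noteq> 0" by blast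
    have "(\<Sum>a\<in>in_arcs V E v. y a t) \<ge> 0"
      using y_nonneg[of V E y t v] yb[OF t(1)] by blast
    moreover have "x v (t - 1) \<ge> 0"
    proof -
      have "t - 1 \<in> {0..T}" using t(1) by auto
      then show ?thesis using xb[OF vV, of "t - 1"] by auto
    qed
    ultimately have "x v t > 0" using c4[OF t(1)] t(2) by simp
    then have "x v t = 1" using xb[OF vV, of t] t(1) by auto
    then show ?thesis using that[of t] t(1) by simp
  qed
  have "v \<in> (prop_step V E ^^ t) {v\<in>V. x v 0 = 1}" using Xeq[OF t(1)] t(2) vV by blast
  then have "v \<in> (prop_step V E ^^ T) {v\<in>V. x v 0 = 1}" using X_mono[OF t(1), where V=V and E=E and C="{v\<in>V. x v 0 = 1}"] by blast
  then show ?thesis using Xeq[of T] by blast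
qed

theorem corollary4p7:
  fixes V :: "'a set" and E :: "'a \<Rightarrow> 'a \<Rightarrow> bool"
    and x :: "'a \<Rightarrow> nat \<Rightarrow> real" and y :: "'a \<times> 'a \<Rightarrow> nat \<Rightarrow> real" and z :: "nat \<Rightarrow> real"
  assumes "simple_graph V E"
    and "tsm_optimal V E (card V - 1) x y z"
  shows "zero_forcing_set V E {v \<in> V. x v 0 = 1}
    \<and> throttle V E = throttle_set V E {v \<in> V. x v 0 = 1}
    \<and> (\<exists>k::nat. throttle_set V E {v \<in> V. x v 0 = 1} = enat k
               \<and> real k = tsm_objective V (card V - 1) x z)"
proof -
  define T where "T = card V - 1"
  define C where "C = {v \<in> V. x v 0 = 1}"
  have G: "simple_graph V E" by fact
  have F: "tsm_feasible V E T x y z" using assms(2) unfolding tsm_optimal_def T_def by blast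
  have opt: "\<And>x' y' z'. tsm_feasible V E T x' y' z' \<Longrightarrow> tsm_objective V T x z \<le> tsm_objective V T x' z'"
    using assms(2) unfolding tsm_optimal_def T_def by blast
  have finV: "finite V" using G unfolding simple_graph_def by auto
  have CV: "C \<subseteq> V" unfolding C_def by auto
  have xb: "\<And>v t'. v \<in> V \<Longrightarrow> t' \<in> {0..T} \<Longrightarrow> x v t' \<in> {0,1}"
    using feasD(1)[OF F] by blast
  have Xeq: "\<And>t. t \<le> T \<Longrightarrow> {v\<in>V. x v t = 1} = (prop_step V E ^^ t) C"
    using feas_X[OF G F] unfolding C_def by blast
  have XT: "(prop_step V E ^^ T) C = V"
    using Xeq[of T] feas_all[OF G F] by auto
  have zf: "zero_forcing_set V E C"
    unfolding zero_forcing_set_def using CV XT X_closure[where V=V and E=E and t=T and C=C] by auto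
  have ex: "\<exists>t. (prop_step V E ^^ t) C = V" using XT by blast
  define L where "L = (LEAST t. (prop_step V E ^^ t) C = V)"
  have ts: "throttle_set V E C = enat (card C + L)"
    unfolding throttle_set_def prop_time_def L_def using ex by simp
  have obj: "tsm_objective V T x z = real (card C + L)"
    unfolding L_def
  proof (rule obj_eq[OF finV CV XT])
    show "\<forall>v\<in>V. x v 0 = (if v \<in> C then 1 else 0)"
      using xb unfolding C_def by fastforce
    show "\<forall>t\<in>{1..T}. z t = (if (prop_step V E ^^ t) C \<noteq> (prop_step V E ^^ (t - 1)) C then 1 else 0)"
    proof
      fix t assume t: "t \<in> {1..T}"
      have "z t = (if {v\<in>V. x v t = 1} \<noteq> {v\<in>V. x v (t - 1) = 1} then 1 else 0)"
        by (rule feas_z[OF G F t])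
      moreover have "{v\<in>V. x v t = 1} = (prop_step V E ^^ t) C" using Xeq t by auto
      moreover have "{v\<in>V. x v (t - 1) = 1} = (prop_step V E ^^ (t - 1)) C"
        by (rule Xeq) (use t in auto)
      ultimately show "z t = (if (prop_step V E ^^ t) C \<noteq> (prop_step V E ^^ (t - 1)) C then 1 else 0)"
        by simp
    qed
  qed
  have le: "throttle_set V E C \<le> throttle_set V E C'" if "C' \<in> Pow V" for C'
  proof (cases "\<exists>t. (prop_step V E ^^ t) C' = V")
    case True
    have C'V: "C' \<subseteq> V" using that by auto
    define L' where "L' = (LEAST t. (prop_step V E ^^ t) C' = V)"
    have "L' \<le> card V - 1" by (rule X_bound[OF C'V finV True L'_def])
    moreover have "(prop_step V E ^^ L') C' = V" using True unfolding L'_def by (rule LeastI_ex)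
    ultimately have XT': "(prop_step V E ^^ T) C' = V" using X_V unfolding T_def by blast
    obtain x' y' z' where f': "tsm_feasible V E T x' y' z'"
      and o': "tsm_objective V T x' z' = real (card C' + L')"
      using construct[OF G C'V XT'] unfolding L'_def by blast
    have "real (card C + L) \<le> real (card C' + L')" using opt[OF f'] obj o' by simp
    then have "card C + L \<le> card C' + L'" by linarith
    moreover have "throttle_set V E C' = enat (card C' + L')"
      unfolding throttle_set_def prop_time_def L'_def using True by simp
    ultimately show ?thesis using ts by simp
  next
    case False
    then have "throttle_set V E C' = \<infinity>" unfolding throttle_set_def prop_time_def by simp
    then show ?thesis by simp
  qed
  have th: "throttle V E = throttle_set V E C"
    unfolding throttle_def
  proof (rule antisym)
    show "(INF C\<in>Pow V. throttle_set V E C) \<le> throttle_set V E C"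
      using CV by (intro INF_lower) auto
    show "throttle_set V E C \<le> (INF C\<in>Pow V. throttle_set V E C)"
      using le by (intro INF_greatest) auto
  qed
  show ?thesis
    unfolding C_def[symmetric] T_def[symmetric]
    using zf th ts obj by auto
qed

end
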